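(* Let $k\in\,]0,2]$, $M>0$, $\beta\in\,]0,\tfrac12[$, $0<\sigma_0\le\min\{1,\frac{3\beta^3}{4\pi M^2}\}$ and $I=\inf_{f\in\mathcal A}\mathcal D(f)$. Let $h\in\mathcal A$ with $\mathcal D(h)<0$ and let $\delta>0$ be such that $|\mathcal D(h)|\ge M+\delta$. Let $(R_n)$ be a sequence with $$R_n\ge\max\Big\{\frac{8M}{3},\frac{2M}{1-\frac{1}{(1+\frac{\delta}{6M})^2}}\Big\},\quad n\in\mathbb N.$$ Then there is no sequence $(f_n)\subset\mathcal A$ with $\lim_{n\to\infty}\mathcal D(f_n)=I$, $f_n\le1$ for all $n$, and $\lim_{n\to\infty}(\Delta M)_n\in\,]0,M[$, where $(\Delta M)_n=\int_{|x|\ge R_n}\int_{\mathbb R^3}\sqrt{1+|v|^2}f_n\,dx\,dv$.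
   Context: Let $\chi(s)=\frac{k}{k+1}s^{1+1/k}$. A measurable $f\ge0$ on $\mathbb R^3\times\mathbb R^3$ is spherically symmetric if $f(Ax,Av)=f(x,v)$ for all $A\in SO(3)$. For such $f$: $\rho_f(x)=\int\sqrt{1+|v|^2}f(x,v)\,dv$ (radial, written $\rho_f(r)$), $m_f(r)=\int_{|x|\le r}\int\sqrt{1+|v|^2}f\,dx\,dv$, $\lambda_f$ given by $e^{-2\lambda_f(r)}=1-2m_f(r)/r$, and $\mathcal D(f)=\int\int e^{\lambda_f(|x|)}(\chi(f)-f)\,dx\,dv$. $\mathcal A$ is the set of measurable spherically symmetric $f\ge0$ with $\int\int\sqrt{1+|v|^2}f\,dx\,dv=M$ and $\rho_f(r)\le\sigma_0$ for all $r\ge0$. *)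

theory Defs
  imports "HOL-Analysis.Analysis"
begin

definition chi :: "real \<Rightarrow> real \<Rightarrow> real" where
  "chi k s = k / (k + 1) * s powr (1 + 1 / k)"

definition sph_sym :: "(real^3 \<Rightarrow> real^3 \<Rightarrow> real) \<Rightarrow> bool" where
  "sph_sym f \<longleftrightarrow> (\<forall>A x v. rotation_matrix A \<longrightarrow> f (A *v x) (A *v v) = f x v)"

definition rho :: "(real^3 \<Rightarrow> real^3 \<Rightarrow> real) \<Rightarrow> real^3 \<Rightarrow> ennreal" where
  "rho f x = (\<integral>\<^sup>+ v. ennreal (sqrt (1 + (norm v)\<^sup>2) * f x v) \<partial>lebesgue)"

definition total_mass :: "(real^3 \<Rightarrow> real^3 \<Rightarrow> real) \<Rightarrow> ennreal" where
  "total_mass f = (\<integral>\<^sup>+ x. \<integral>\<^sup>+ v. ennreal (sqrt (1 + (norm v)\<^sup>2) * f x v) \<partial>lebesgue \<partial>lebesgue)"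

definition mass :: "(real^3 \<Rightarrow> real^3 \<Rightarrow> real) \<Rightarrow> real \<Rightarrow> real" where
  "mass f r = enn2real (\<integral>\<^sup>+ x. indicator {x. norm x \<le> r} x *
        (\<integral>\<^sup>+ v. ennreal (sqrt (1 + (norm v)\<^sup>2) * f x v) \<partial>lebesgue) \<partial>lebesgue)"

text \<open>e^{lambda_f(r)}, where e^{-2 lambda_f(r)} = 1 - 2 m_f(r)/r (value 1 at r = 0)\<close>
definition exp_lambda :: "(real^3 \<Rightarrow> real^3 \<Rightarrow> real) \<Rightarrow> real \<Rightarrow> real" where
  "exp_lambda f r = 1 / sqrt (1 - 2 * mass f r / r)"

definition Dfun :: "real \<Rightarrow> (real^3 \<Rightarrow> real^3 \<Rightarrow> real) \<Rightarrow> ereal" where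
  "Dfun k f =
     (let g = (\<lambda>x v. exp_lambda f (norm x) * (chi k (f x v) - f x v)) in
      enn2ereal (\<integral>\<^sup>+ x. \<integral>\<^sup>+ v. ennreal (max (g x v) 0) \<partial>lebesgue \<partial>lebesgue)
      - enn2ereal (\<integral>\<^sup>+ x. \<integral>\<^sup>+ v. ennreal (max (- g x v) 0) \<partial>lebesgue \<partial>lebesgue))"

definition admissible :: "real \<Rightarrow> real \<Rightarrow> (real^3 \<Rightarrow> real^3 \<Rightarrow> real) set" where
  "admissible M \<sigma>0 = {f.
     (\<lambda>p. f (fst p) (snd p)) \<in> borel_measurable (lebesgue :: ((real^3) \<times> (real^3)) measure)
     \<and> (\<forall>x v. 0 \<le> f x v)
     \<and> sph_sym f
     \<and> total_mass f = ennreal M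
     \<and> (\<forall>x. rho f x \<le> ennreal \<sigma>0)}"

definition outer_mass :: "(real^3 \<Rightarrow> real^3 \<Rightarrow> real) \<Rightarrow> real \<Rightarrow> ennreal" where
  "outer_mass f R = (\<integral>\<^sup>+ x. indicator {x. R \<le> norm x} x *
        (\<integral>\<^sup>+ v. ennreal (sqrt (1 + (norm v)\<^sup>2) * f x v) \<partial>lebesgue) \<partial>lebesgue)"

end

theory Submission
  imports Defs
begin


lemma completion_measurable_AE:
  fixes f g :: "'a \<Rightarrow> 'b::topological_space"
  assumes g: "g \<in> borel_measurable M" and ae: "AE x in M. f x = g x"
  shows "f \<in> borel_measurable (completion M)"
proof -
  obtain N where N: "N \<in> null_sets M" "{x\<in>space M. f x \<noteq> g x} \<subseteq> N"
    using ae unfolding eventually_ae_filter by auto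
  show ?thesis
  proof (rule measurableI)
    fix x assume "x \<in> space (completion M)" then show "f x \<in> space borel" by simp
  next
    fix A :: "'b set" assume A: "A \<in> sets borel"
    have eq: "f -` A \<inter> space (completion M) = ((g -` A \<inter> space M) - N) \<union> ((f -` A \<inter> space M) \<inter> N)"
      using N by auto
    have 1: "(g -` A \<inter> space M) - N \<in> sets (completion M)"
      using g A N by (auto intro!: sets.Diff sets_completionI_sets simp: measurable_sets)
    have "(f -` A \<inter> space M) \<inter> N \<in> null_sets (completion M)"
      by (rule null_sets_completion_subset[of _ N]) (use N in \<open>auto intro: null_sets_completionI\<close>)
    then have 2: "(f -` A \<inter> space M) \<inter> N \<in> sets (completion M)" by auto
    show "f -` A \<inter> space (completion M) \<in> sets (completion M)"
      unfolding eq using 1 2 by auto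
  qed
qed

lemma tonelli_lebesgue:
  fixes F :: "'a::euclidean_space \<times> 'b::euclidean_space \<Rightarrow> ennreal"
  assumes F: "F \<in> borel_measurable lebesgue"
  shows "(\<lambda>x. \<integral>\<^sup>+y. F (x,y) \<partial>lebesgue) \<in> borel_measurable lebesgue"
    and "(\<integral>\<^sup>+x. \<integral>\<^sup>+y. F (x,y) \<partial>lebesgue \<partial>lebesgue) = (\<integral>\<^sup>+p. F p \<partial>lebesgue)"
proof -
  have PS: "pair_sigma_finite (lborel :: 'a measure) (lborel :: 'b measure)"
    by (simp add: lborel.sigma_finite_measure_axioms pair_sigma_finite.intro)
  obtain G where G: "G \<in> borel_measurable (lborel :: ('a \<times> 'b) measure)" and ae: "AE p in lborel. F p = G p"
    using completion_ex_borel_measurable[OF F] by blast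
  have G2: "G \<in> borel_measurable (lborel \<Otimes>\<^sub>M lborel)" using G by (simp add: lborel_prod)
  have ae2: "AE p in lborel \<Otimes>\<^sub>M lborel. F p = G p" by (subst lborel_prod) (rule ae)
  have ae3: "AE x in lborel. AE y in lborel. F (x,y) = G (x,y)"
    using pair_sigma_finite.AE_pair[OF PS ae2] .
  define H where "H x = (\<integral>\<^sup>+y. G (x,y) \<partial>lborel)" for x
  have H: "H \<in> borel_measurable lborel"
    unfolding H_def using lborel.borel_measurable_nn_integral_fst[OF G2] .
  have ae4: "AE x in lborel. (\<integral>\<^sup>+y. F (x,y) \<partial>lebesgue) = H x"
    using ae3 by eventually_elim (simp add: nn_integral_completion H_def nn_integral_cong_AE)
  show "(\<lambda>x. \<integral>\<^sup>+y. F (x,y) \<partial>lebesgue) \<in> borel_measurable lebesgue"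
    by (rule completion_measurable_AE[OF H ae4])
  have "(\<integral>\<^sup>+x. \<integral>\<^sup>+y. F (x,y) \<partial>lebesgue \<partial>lebesgue) = (\<integral>\<^sup>+x. H x \<partial>lborel)"
    by (subst nn_integral_completion) (rule nn_integral_cong_AE[OF ae4])
  also have "\<dots> = integral\<^sup>N (lborel \<Otimes>\<^sub>M lborel) G"
    unfolding H_def by (rule lborel.nn_integral_fst[OF G2])
  also have "\<dots> = integral\<^sup>N lborel G" by (simp add: lborel_prod)
  also have "\<dots> = integral\<^sup>N lborel F" using ae by (intro nn_integral_cong_AE) auto
  also have "\<dots> = (\<integral>\<^sup>+p. F p \<partial>lebesgue)" by (simp add: nn_integral_completion)
  finally show "(\<integral>\<^sup>+x. \<integral>\<^sup>+y. F (x,y) \<partial>lebesgue \<partial>lebesgue) = (\<integral>\<^sup>+p. F p \<partial>lebesgue)" .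
qed



lemma lebesgue_scale_eq:
  assumes s: "s \<noteq> (0::real)"
  shows "(lebesgue :: 'a::euclidean_space measure) =
     density (distr lebesgue lebesgue (\<lambda>x. s *\<^sub>R x)) (\<lambda>_. ennreal (\<bar>s\<bar> ^ DIM('a)))"
  using lebesgue_affine_euclidean[where c="\<lambda>_::'a. s" and t=0] s
  unfolding scaleR_scaleR[symmetric] scaleR_sum_right[symmetric] euclidean_representation prod_constant
  by simp

lemma nn_integral_scale_lebesgue:
  fixes \<phi> :: "'a::euclidean_space \<Rightarrow> ennreal"
  assumes \<phi>[measurable]: "\<phi> \<in> borel_measurable lebesgue" and s: "s > 0"
  shows "(\<integral>\<^sup>+x. \<phi> (s *\<^sub>R x) \<partial>lebesgue) = ennreal (1 / s ^ DIM('a)) * (\<integral>\<^sup>+x. \<phi> x \<partial>lebesgue)"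
proof -
  have "(\<integral>\<^sup>+x. \<phi> x \<partial>lebesgue) = (\<integral>\<^sup>+x. \<phi> x \<partial>density (distr lebesgue lebesgue (\<lambda>x. s *\<^sub>R x)) (\<lambda>_. ennreal (\<bar>s\<bar> ^ DIM('a))))"
    by (rule arg_cong[where f="\<lambda>M. integral\<^sup>N M \<phi>"], rule lebesgue_scale_eq) (use s in auto)
  also have "\<dots> = (\<integral>\<^sup>+x. ennreal (\<bar>s\<bar> ^ DIM('a)) * \<phi> x \<partial>distr lebesgue lebesgue (\<lambda>x. s *\<^sub>R x))"
    by (subst nn_integral_density) auto
  also have "\<dots> = ennreal (\<bar>s\<bar> ^ DIM('a)) * (\<integral>\<^sup>+x. \<phi> x \<partial>distr lebesgue lebesgue (\<lambda>x. s *\<^sub>R x))"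
    by (rule nn_integral_cmult) simp
  also have "\<dots> = ennreal (s ^ DIM('a)) * (\<integral>\<^sup>+x. \<phi> (s *\<^sub>R x) \<partial>lebesgue)"
    using s by (subst nn_integral_distr) auto
  finally have eq: "(\<integral>\<^sup>+x. \<phi> x \<partial>lebesgue) = ennreal (s ^ DIM('a)) * (\<integral>\<^sup>+x. \<phi> (s *\<^sub>R x) \<partial>lebesgue)" .
  have "ennreal (1 / s ^ DIM('a)) * ennreal (s ^ DIM('a)) = 1"
    using s by (simp add: ennreal_mult[symmetric])
  then show ?thesis unfolding eq by (simp add: mult.assoc[symmetric])
qed

lemma measurable_scale_fst:
  assumes s: "s \<noteq> (0::real)"
  shows "(\<lambda>p::'a::euclidean_space \<times> 'b::euclidean_space. (s *\<^sub>R fst p, snd p)) \<in> lebesgue \<rightarrow>\<^sub>M lebesgue"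
proof -
  define c where "c j = (if fst j = 0 then 1 else s)" for j :: "'a \<times> 'b"
  have c: "\<And>j. j \<in> Basis \<Longrightarrow> c j \<noteq> 0" using s by (auto simp: c_def)
  have eq: "(\<lambda>p. 0 + (\<Sum>j\<in>Basis. (c j * (p \<bullet> j)) *\<^sub>R j)) = (\<lambda>p::'a \<times> 'b. (s *\<^sub>R fst p, snd p))"
  proof
    fix p :: "'a \<times> 'b"
    show "0 + (\<Sum>j\<in>Basis. (c j * (p \<bullet> j)) *\<^sub>R j) = (s *\<^sub>R fst p, snd p)"
    proof (rule euclidean_eqI)
      fix b :: "'a \<times> 'b" assume b: "b \<in> Basis"
      have "(0 + (\<Sum>j\<in>Basis. (c j * (p \<bullet> j)) *\<^sub>R j)) \<bullet> b = c b * (p \<bullet> b)"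
        using b by (simp add: inner_sum_left_Basis)
      also have "\<dots> = (s *\<^sub>R fst p, snd p) \<bullet> b"
        using b by (auto simp: c_def Basis_prod_def inner_prod_def)
      finally show "(0 + (\<Sum>j\<in>Basis. (c j * (p \<bullet> j)) *\<^sub>R j)) \<bullet> b = (s *\<^sub>R fst p, snd p) \<bullet> b" .
    qed
  qed
  show ?thesis
    using lebesgue_affine_measurable[of c 0, OF c] unfolding eq .
qed



lemma mass_nonneg: "0 \<le> mass f r"
  by (simp add: mass_def)

lemma mass_le_total:
  assumes "total_mass f = ennreal M" "0 \<le> M"
  shows "mass f r \<le> M"
proof -
  have "(\<integral>\<^sup>+ x. indicator {x. norm x \<le> r} x *
        (\<integral>\<^sup>+ v. ennreal (sqrt (1 + (norm v)\<^sup>2) * f x v) \<partial>lebesgue) \<partial>lebesgue) \<le> total_mass f"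
    unfolding total_mass_def
    by (intro nn_integral_mono) (auto simp: indicator_def)
  then show ?thesis using assms unfolding mass_def
    using enn2real_mono[of _ "ennreal M"] by simp
qed

lemma mass_mono:
  assumes "total_mass f = ennreal M" "0 \<le> M"
  shows "mono (mass f)"
proof
  fix r1 r2 :: real assume r: "r1 \<le> r2"
  have le: "(\<integral>\<^sup>+ x. indicator {x. norm x \<le> r1} x *
        (\<integral>\<^sup>+ v. ennreal (sqrt (1 + (norm v)\<^sup>2) * f x v) \<partial>lebesgue) \<partial>lebesgue) \<le>
        (\<integral>\<^sup>+ x. indicator {x. norm x \<le> r2} x *
        (\<integral>\<^sup>+ v. ennreal (sqrt (1 + (norm v)\<^sup>2) * f x v) \<partial>lebesgue) \<partial>lebesgue)"
    using r by (intro nn_integral_mono) (auto simp: indicator_def)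
  have le2: "(\<integral>\<^sup>+ x. indicator {x. norm x \<le> r2} x *
        (\<integral>\<^sup>+ v. ennreal (sqrt (1 + (norm v)\<^sup>2) * f x v) \<partial>lebesgue) \<partial>lebesgue) \<le> total_mass f"
    unfolding total_mass_def
    by (intro nn_integral_mono) (auto simp: indicator_def)
  have fin: "(\<integral>\<^sup>+ x. indicator {x. norm x \<le> r2} x *
        (\<integral>\<^sup>+ v. ennreal (sqrt (1 + (norm v)\<^sup>2) * f x v) \<partial>lebesgue) \<partial>lebesgue) < top"
      using le2 assms(1) by (simp add: order_le_less_trans)
  show "mass f r1 \<le> mass f r2" unfolding mass_def
    by (rule enn2real_mono[OF le fin])
qed

lemma unit_ball_vol_3: "unit_ball_vol 3 = 4 / 3 * pi"
proof -
  have "unit_ball_vol (numeral (Num.Bit1 Num.One)) = 2 ^ (2 * Suc (numeral Num.One)) * fact (Suc (numeral Num.One)) /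
    fact (2 * Suc (numeral Num.One)) * pi ^ numeral Num.One"
    by (rule unit_ball_vol_numeral(2))
  then show ?thesis by (simp add: fact_numeral)
qed

lemma mass_ball:
  fixes f :: "real^3 \<Rightarrow> real^3 \<Rightarrow> real"
  assumes rho: "\<forall>x. rho f x \<le> ennreal \<sigma>0" and s: "0 \<le> \<sigma>0" and r: "0 \<le> r"
  shows "mass f r \<le> \<sigma>0 * (4 / 3 * pi * r ^ 3)"
proof -
  have "(\<integral>\<^sup>+ x. indicator {x. norm x \<le> r} x *
        (\<integral>\<^sup>+ v. ennreal (sqrt (1 + (norm v)\<^sup>2) * f x v) \<partial>lebesgue) \<partial>lebesgue) \<le>
        (\<integral>\<^sup>+ x. ennreal \<sigma>0 * indicator (cball (0::real^3) r) x \<partial>lebesgue)"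
  proof (rule nn_integral_mono)
    fix x :: "real^3"
    show "indicator {x. norm x \<le> r} x *
        (\<integral>\<^sup>+ v. ennreal (sqrt (1 + (norm v)\<^sup>2) * f x v) \<partial>lebesgue) \<le> ennreal \<sigma>0 * indicator (cball 0 r) x"
      using rho[rule_format, of x] unfolding rho_def
      by (cases "norm x \<le> r") (auto simp: indicator_def dist_norm)
  qed
  also have "\<dots> = ennreal \<sigma>0 * emeasure lebesgue (cball (0::real^3) r)"
    by (simp add: nn_integral_cmult_indicator)
  also have "emeasure lebesgue (cball (0::real^3) r) = emeasure lborel (cball (0::real^3) r)"
    by simp
  also have "\<dots> = ennreal (4 / 3 * pi * r ^ 3)"
    using emeasure_cball[OF r, where c="0::real^3"] by (simp add: unit_ball_vol_3)
  also have "ennreal \<sigma>0 * ennreal (4 / 3 * pi * r ^ 3) = ennreal (\<sigma>0 * (4 / 3 * pi * r ^ 3))"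
    by (rule ennreal_mult[symmetric]) (use s r in auto)
  finally have "(\<integral>\<^sup>+ x. indicator {x. norm x \<le> r} x *
        (\<integral>\<^sup>+ v. ennreal (sqrt (1 + (norm v)\<^sup>2) * f x v) \<partial>lebesgue) \<partial>lebesgue) \<le> ennreal (\<sigma>0 * (4 / 3 * pi * r ^ 3))" .
  moreover have "0 \<le> \<sigma>0 * (4 / 3 * pi * r ^ 3)" using s r by simp
  ultimately show ?thesis unfolding mass_def
    using enn2real_mono[of _ "ennreal (\<sigma>0 * (4 / 3 * pi * r ^ 3))"] by simp
qed



lemma ratio_arith:
  fixes m r M \<beta> \<sigma>0 :: real
  assumes m1: "m \<le> M" and m2: "m \<le> \<sigma>0 * (4 / 3 * pi * r ^ 3)" and r: "0 < r"
    and M: "0 < M" and b: "0 < \<beta>" and s: "0 \<le> \<sigma>0" and s2: "\<sigma>0 \<le> 3 * \<beta>^3 / (4 * pi * M\<^sup>2)"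
  shows "m / r \<le> \<beta>"
proof (cases "M \<le> \<beta> * r")
  case True
  then have "m \<le> \<beta> * r" using m1 by simp
  then show ?thesis using r by (simp add: divide_le_eq mult.commute)
next
  case False
  then have rb: "r < M / \<beta>" using b by (simp add: less_divide_eq mult.commute)
  have "\<sigma>0 * (4 / 3 * pi * r ^ 3) \<le> 3 * \<beta>^3 / (4 * pi * M\<^sup>2) * (4 / 3 * pi * r ^ 3)"
    using s2 r by (intro mult_right_mono) auto
  also have "\<dots> = \<beta>^3 * r^3 / M\<^sup>2" using M by (simp add: field_simps)
  finally have "m \<le> \<beta>^3 * r^3 / M\<^sup>2" using m2 by linarith
  then have "m / r \<le> \<beta>^3 * r^2 / M\<^sup>2" using r by (simp add: divide_le_eq power3_eq_cube power2_eq_square field_simps)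
  also have "\<beta>^3 * r^2 / M\<^sup>2 \<le> \<beta>^3 * (M / \<beta>)^2 / M\<^sup>2"
    using rb r b M by (intro divide_right_mono mult_left_mono power_mono) auto
  also have "\<dots> = \<beta>" using b M by (simp add: field_simps power2_eq_square power3_eq_cube)
  finally show ?thesis .
qed

lemma mass_ratio:
  fixes f :: "real^3 \<Rightarrow> real^3 \<Rightarrow> real"
  assumes rho: "\<forall>x. rho f x \<le> ennreal \<sigma>0" and tm: "total_mass f = ennreal M"
    and M: "0 < M" and b: "0 < \<beta>" and s: "0 \<le> \<sigma>0" and s2: "\<sigma>0 \<le> 3 * \<beta>^3 / (4 * pi * M\<^sup>2)"
    and r: "0 < r"
  shows "mass f r / r \<le> \<beta>"
  using ratio_arith[OF mass_le_total[OF tm] mass_ball[OF rho s] r M b s s2] M r by simp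

lemma exp_lambda_bounds:
  assumes m: "0 \<le> mass f r" and rat: "r > 0 \<Longrightarrow> mass f r / r \<le> \<beta>" and b: "0 \<le> \<beta>" "\<beta> < 1/2" and r: "0 \<le> r"
  shows "1 \<le> exp_lambda f r" "exp_lambda f r \<le> 1 / sqrt (1 - 2 * \<beta>)"
proof -
  define t where "t = 2 * mass f r / r"
  have t: "0 \<le> t" "t \<le> 2 * \<beta>"
  proof -
    show "0 \<le> t" using m r by (simp add: t_def)
    show "t \<le> 2 * \<beta>"
    proof (cases "r = 0")
      case True then show ?thesis using b by (simp add: t_def)
    next
      case False then have "mass f r / r \<le> \<beta>" using rat r by simp
      then show ?thesis by (simp add: t_def)
    qed
  qed
  have e: "exp_lambda f r = 1 / sqrt (1 - t)" by (simp add: exp_lambda_def t_def)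
  have p: "0 < 1 - t" using t b by linarith
  have "sqrt (1 - t) \<le> 1" using t by simp
  then show "1 \<le> exp_lambda f r" unfolding e using p by (simp add: divide_le_eq)
  have "sqrt (1 - 2 * \<beta>) \<le> sqrt (1 - t)" using t by simp
  then show "exp_lambda f r \<le> 1 / sqrt (1 - 2 * \<beta>)" unfolding e using p b
    by (intro divide_left_mono mult_pos_pos) auto
qed



lemma chi_zero[simp]: "chi k 0 = 0" by (simp add: chi_def)

lemma chi_nonneg: "0 \<le> s \<Longrightarrow> 0 < k \<Longrightarrow> 0 \<le> chi k s"
  by (simp add: chi_def)

lemma chi_le: assumes "0 \<le> s" "s \<le> 1" "0 < k" shows "chi k s \<le> s"
proof (cases "s = 0")
  case True then show ?thesis by simp
next
  case False
  then have sp: "0 < s" using assms by simp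
  have "s powr (1 + 1 / k) = s * s powr (1 / k)" using sp by (simp add: powr_add)
  also have "\<dots> \<le> s * 1" using sp assms powr_mono2[of "1/k" s 1] by (intro mult_left_mono) auto
  finally have a: "s powr (1 + 1 / k) \<le> s" by simp
  have "k / (k + 1) \<le> 1" using assms by simp
  then have "k / (k + 1) * s powr (1 + 1 / k) \<le> 1 * s"
    using a assms by (intro mult_mono) auto
  then show ?thesis by (simp add: chi_def)
qed

lemma fst_leb[measurable]: "(fst :: ('a::euclidean_space \<times> 'b::euclidean_space) \<Rightarrow> 'a) \<in> lebesgue \<rightarrow>\<^sub>M borel"
  by (intro measurable_completion) (simp add: borel_measurable_continuous_onI continuous_on_fst)

lemma snd_leb[measurable]: "(snd :: ('a::euclidean_space \<times> 'b::euclidean_space) \<Rightarrow> 'b) \<in> lebesgue \<rightarrow>\<^sub>M borel"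
  by (intro measurable_completion) (simp add: borel_measurable_continuous_onI continuous_on_snd)

lemma exp_lambda_meas:
  assumes "mono (mass f)"
  shows "exp_lambda f \<in> borel_measurable borel"
proof -
  have [measurable]: "mass f \<in> borel_measurable borel" using borel_measurable_mono[OF assms] .
  show ?thesis unfolding exp_lambda_def[abs_def] by measurable
qed

lemma tm1:
  fixes f :: "real^3 \<Rightarrow> real^3 \<Rightarrow> real"
  assumes f[measurable]: "(\<lambda>p. f (fst p) (snd p)) \<in> borel_measurable lebesgue"
  shows "(\<lambda>p. chi k (f (fst p) (snd p))) \<in> borel_measurable lebesgue"
  unfolding chi_def by measurable

lemma tm2:
  assumes e[measurable]: "exp_lambda f \<in> borel_measurable borel"
  shows "(\<lambda>p::(real^3) \<times> (real^3). exp_lambda f (norm (fst p))) \<in> borel_measurable lebesgue"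
  by measurable

lemma tm3:
  shows "(\<lambda>p::(real^3) \<times> (real^3). sqrt (1 + (norm (snd p))\<^sup>2)) \<in> borel_measurable lebesgue"
  by measurable

lemma test_meas:
  fixes f :: "real^3 \<Rightarrow> real^3 \<Rightarrow> real"
  assumes f[measurable]: "(\<lambda>p. f (fst p) (snd p)) \<in> borel_measurable lebesgue"
    and e[measurable]: "exp_lambda f \<in> borel_measurable borel"
  shows "(\<lambda>p. ennreal (max (- (exp_lambda f (norm (fst p)) * (chi k (f (fst p) (snd p)) - f (fst p) (snd p)))) 0))
     \<in> borel_measurable lebesgue"
    "(\<lambda>p. ennreal (E * (sqrt (1 + (norm (snd p))\<^sup>2) * f (fst p) (snd p)))) \<in> borel_measurable lebesgue"
proof -
  note [measurable] = tm1[OF f] tm2[OF e] tm3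
  show "(\<lambda>p. ennreal (max (- (exp_lambda f (norm (fst p)) * (chi k (f (fst p) (snd p)) - f (fst p) (snd p)))) 0))
     \<in> borel_measurable lebesgue" by measurable
  show "(\<lambda>p. ennreal (E * (sqrt (1 + (norm (snd p))\<^sup>2) * f (fst p) (snd p)))) \<in> borel_measurable lebesgue"
    by measurable
qed



definition negI :: "real \<Rightarrow> (real^3 \<Rightarrow> real^3 \<Rightarrow> real) \<Rightarrow> real^3 \<Rightarrow> real^3 \<Rightarrow> ennreal" where
  "negI k f x v = ennreal (max (- (exp_lambda f (norm x) * (chi k (f x v) - f x v))) 0)"

definition posI :: "real \<Rightarrow> (real^3 \<Rightarrow> real^3 \<Rightarrow> real) \<Rightarrow> real^3 \<Rightarrow> real^3 \<Rightarrow> ennreal" where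
  "posI k f x v = ennreal (max (exp_lambda f (norm x) * (chi k (f x v) - f x v)) 0)"

definition NN :: "real \<Rightarrow> (real^3 \<Rightarrow> real^3 \<Rightarrow> real) \<Rightarrow> ennreal" where
  "NN k f = (\<integral>\<^sup>+ x. \<integral>\<^sup>+ v. negI k f x v \<partial>lebesgue \<partial>lebesgue)"

lemma Dfun_eq: "Dfun k f = enn2ereal (\<integral>\<^sup>+ x. \<integral>\<^sup>+ v. posI k f x v \<partial>lebesgue \<partial>lebesgue) - enn2ereal (NN k f)"
  by (simp add: Dfun_def Let_def negI_def posI_def NN_def)

lemma Dfun_small:
  assumes "\<And>x v. 0 \<le> f x v" "\<And>x v. f x v \<le> 1" "\<And>r. 0 \<le> r \<Longrightarrow> 0 \<le> exp_lambda f r" "0 < k"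
  shows "Dfun k f = - enn2ereal (NN k f)"
proof -
  have "posI k f x v = 0" for x v
  proof -
    have "chi k (f x v) - f x v \<le> 0" using chi_le[of "f x v" k] assms by auto
    then have "exp_lambda f (norm x) * (chi k (f x v) - f x v) \<le> 0"
      using assms(3)[of "norm x"] by (simp add: mult_nonneg_nonpos)
    then show ?thesis by (simp add: posI_def max_def)
  qed
  then show ?thesis by (simp add: Dfun_eq zero_ennreal.rep_eq)
qed

lemma wf_meas:
  fixes f :: "real^3 \<Rightarrow> real^3 \<Rightarrow> real"
  assumes f[measurable]: "(\<lambda>p. f (fst p) (snd p)) \<in> borel_measurable lebesgue"
  shows "(\<lambda>p. ennreal (c * (sqrt (1 + (norm (snd p))\<^sup>2) * f (fst p) (snd p)))) \<in> borel_measurable lebesgue"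
proof -
  note [measurable] = tm3
  show ?thesis by measurable
qed

lemma negI_meas:
  fixes f :: "real^3 \<Rightarrow> real^3 \<Rightarrow> real"
  assumes f[measurable]: "(\<lambda>p. f (fst p) (snd p)) \<in> borel_measurable lebesgue"
    and e[measurable]: "exp_lambda f \<in> borel_measurable borel"
  shows "(\<lambda>p. negI k f (fst p) (snd p)) \<in> borel_measurable lebesgue"
  unfolding negI_def using test_meas(1)[OF f e] .

context
  fixes k M \<beta> \<sigma>0 :: real
  assumes k: "0 < k" and M: "0 < M" and b: "0 < \<beta>" "\<beta> < 1/2"
    and s: "0 < \<sigma>0" "\<sigma>0 \<le> 3 * \<beta>^3 / (4 * pi * M\<^sup>2)"
begin

lemma adm_D:
  assumes "f \<in> admissible M \<sigma>0"
  shows "(\<lambda>p. f (fst p) (snd p)) \<in> borel_measurable lebesgue" "\<And>x v. 0 \<le> f x v" "sph_sym f"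
    "total_mass f = ennreal M" "\<And>x. rho f x \<le> ennreal \<sigma>0"
  using assms by (auto simp: admissible_def)

lemma el_bounds:
  assumes "f \<in> admissible M \<sigma>0" "0 \<le> r"
  shows "1 \<le> exp_lambda f r" "exp_lambda f r \<le> 1 / sqrt (1 - 2 * \<beta>)"
proof -
  have rat: "mass f r / r \<le> \<beta>" if "r > 0"
    using mass_ratio[of f \<sigma>0 M \<beta> r] adm_D[OF assms(1)] M b s that by auto
  show "1 \<le> exp_lambda f r" "exp_lambda f r \<le> 1 / sqrt (1 - 2 * \<beta>)"
    using exp_lambda_bounds[OF mass_nonneg rat] b assms(2) by auto
qed

lemma NN_bound:
  assumes f: "f \<in> admissible M \<sigma>0"
  shows "NN k f \<le> ennreal (1 / sqrt (1 - 2 * \<beta>) * M)"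
proof -
  define E where "E = 1 / sqrt (1 - 2 * \<beta>)"
  have E: "1 \<le> E" using el_bounds[OF f, of 0] by (simp add: E_def)
  note fm = adm_D[OF f]
  have pw: "negI k f x v \<le> ennreal (E * (sqrt (1 + (norm v)\<^sup>2) * f x v))" for x v
  proof -
    have e: "1 \<le> exp_lambda f (norm x)" "exp_lambda f (norm x) \<le> E"
      using el_bounds[OF f, of "norm x"] by (auto simp: E_def)
    have c: "0 \<le> chi k (f x v)" using chi_nonneg[OF fm(2) k] .
    have w: "1 \<le> sqrt (1 + (norm v)\<^sup>2)" by simp
    have fx: "0 \<le> f x v" using fm(2) .
    have "- (exp_lambda f (norm x) * (chi k (f x v) - f x v)) \<le> exp_lambda f (norm x) * f x v"
      using e c by (simp add: algebra_simps)
    also have "\<dots> \<le> E * f x v" using e fx by (intro mult_right_mono) auto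
    also have "\<dots> \<le> E * (sqrt (1 + (norm v)\<^sup>2) * f x v)"
      using E mult_right_mono[OF w fx] by (intro mult_left_mono) auto
    finally have "max (- (exp_lambda f (norm x) * (chi k (f x v) - f x v))) 0 \<le> E * (sqrt (1 + (norm v)\<^sup>2) * f x v)"
      using E fx by auto
    then show ?thesis unfolding negI_def by (rule ennreal_leI)
  qed
  have "NN k f \<le> (\<integral>\<^sup>+ x. \<integral>\<^sup>+ v. ennreal (E * (sqrt (1 + (norm v)\<^sup>2) * f x v)) \<partial>lebesgue \<partial>lebesgue)"
    unfolding NN_def by (intro nn_integral_mono pw)
  also have "\<dots> = (\<integral>\<^sup>+ p. ennreal (E * (sqrt (1 + (norm (snd p))\<^sup>2) * f (fst p) (snd p))) \<partial>lebesgue)"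
    using tonelli_lebesgue(2)[OF wf_meas[OF fm(1), of E]] by simp
  also have "\<dots> = (\<integral>\<^sup>+ p. ennreal E * ennreal (sqrt (1 + (norm (snd p))\<^sup>2) * f (fst p) (snd p)) \<partial>lebesgue)"
    using E fm(2) by (intro nn_integral_cong) (simp add: ennreal_mult)
  also have "\<dots> = ennreal E * (\<integral>\<^sup>+ p. ennreal (1 * (sqrt (1 + (norm (snd p))\<^sup>2) * f (fst p) (snd p))) \<partial>lebesgue)"
    using wf_meas[OF fm(1), of 1] by (subst nn_integral_cmult) auto
  also have "(\<integral>\<^sup>+ p. ennreal (1 * (sqrt (1 + (norm (snd p))\<^sup>2) * f (fst p) (snd p))) \<partial>lebesgue) = total_mass f"
    using tonelli_lebesgue(2)[OF wf_meas[OF fm(1), of 1]] by (simp add: total_mass_def)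
  also have "ennreal E * total_mass f = ennreal (E * M)"
    using fm(4) E M by (simp add: ennreal_mult)
  finally show ?thesis by (simp add: E_def)
qed

lemma Dfun_lower:
  assumes f: "f \<in> admissible M \<sigma>0"
  shows "ereal (- (1 / sqrt (1 - 2 * \<beta>) * M)) \<le> Dfun k f"
proof -
  define P where "P = (\<integral>\<^sup>+ x. \<integral>\<^sup>+ v. posI k f x v \<partial>lebesgue \<partial>lebesgue)"
  have N: "NN k f \<le> ennreal (1 / sqrt (1 - 2 * \<beta>) * M)" by (rule NN_bound[OF f])
  then have N2: "enn2ereal (NN k f) \<le> ereal (1 / sqrt (1 - 2 * \<beta>) * M)"
  proof -
    have X0: "0 \<le> 1 / sqrt (1 - 2 * \<beta>) * M" using b M by simp
    show ?thesis using N[unfolded less_eq_ennreal.rep_eq] X0 by simp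
  qed
  obtain n where n: "enn2ereal (NN k f) = ereal n" "0 \<le> n"
    using N2 enn2ereal_nonneg[of "NN k f"] by (cases "enn2ereal (NN k f)") auto
  have P: "0 \<le> enn2ereal P" by simp
  have "ereal (- (1 / sqrt (1 - 2 * \<beta>) * M)) \<le> enn2ereal P - enn2ereal (NN k f)"
    using N2 P unfolding n by (cases "enn2ereal P") auto
  then show ?thesis by (simp add: Dfun_eq P_def)
qed

end



lemma rot_norm: "rotation_matrix A \<Longrightarrow> norm (A *v x) = norm (x::real^'n)"
proof -
  assume "rotation_matrix A"
  then have "orthogonal_matrix A" by (simp add: rotation_matrix_def)
  then have "orthogonal_transformation (\<lambda>x::real^'n. A *v x)"
    using orthogonal_transformation_matrix[of "\<lambda>x::real^'n. A *v x"] by simp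
  then show ?thesis using orthogonal_transformation_norm by blast
qed

definition cutR :: "real \<Rightarrow> (real^3 \<Rightarrow> real^3 \<Rightarrow> real) \<Rightarrow> real^3 \<Rightarrow> real^3 \<Rightarrow> real" where
  "cutR R f x v = (if norm x < R then f x v else 0)"

definition scl :: "real \<Rightarrow> (real^3 \<Rightarrow> real^3 \<Rightarrow> real) \<Rightarrow> real^3 \<Rightarrow> real^3 \<Rightarrow> real" where
  "scl s g x v = g (s *\<^sub>R x) v"

lemma ind_pull: "indicator A x * (\<integral>\<^sup>+v. g v \<partial>N) = (\<integral>\<^sup>+v. (indicator A x :: ennreal) * g v \<partial>N)"
  by (cases "x \<in> A") simp_all

lemma cutR_meas:
  assumes f[measurable]: "(\<lambda>p. f (fst p) (snd p)) \<in> borel_measurable lebesgue"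
  shows "(\<lambda>p. cutR R f (fst p) (snd p)) \<in> borel_measurable lebesgue"
  unfolding cutR_def by measurable

lemma cutR_sph: "sph_sym f \<Longrightarrow> sph_sym (cutR R f)"
  unfolding sph_sym_def cutR_def by (simp add: rot_norm)

lemma rho_cutR: "rho (cutR R f) x = indicator {x. norm x < R} x * rho f x"
  unfolding rho_def cutR_def by (cases "norm x < R") auto

lemma mass_cutR: "r < R \<Longrightarrow> mass (cutR R f) r = mass f r"
  unfolding mass_def
  by (intro arg_cong[where f=enn2real] nn_integral_cong) (auto simp: rho_cutR[unfolded rho_def] indicator_def)

lemma el_cutR: "r < R \<Longrightarrow> exp_lambda (cutR R f) r = exp_lambda f r"
  by (simp add: exp_lambda_def mass_cutR)

lemma negI_cutR: "negI k (cutR R f) x v = indicator {x. norm x < R} x * negI k f x v"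
  by (cases "norm x < R") (auto simp: negI_def cutR_def el_cutR)

lemma negI_cutR': "negI k (cutR R f) x = (\<lambda>v. indicator {x. norm x < R} x * negI k f x v)"
  by (rule ext, rule negI_cutR)

lemma total_mass_split:
  fixes f :: "real^3 \<Rightarrow> real^3 \<Rightarrow> real"
  assumes f[measurable]: "(\<lambda>p. f (fst p) (snd p)) \<in> borel_measurable lebesgue" and nn: "\<And>x v. 0 \<le> f x v"
  shows "total_mass f = total_mass (cutR R f) + outer_mass f R"
proof -
  note [measurable] = tm3
  define F1 where "F1 p = indicator {x. norm x < R} (fst p) * ennreal (sqrt (1 + (norm (snd p))\<^sup>2) * f (fst p) (snd p))"
    for p :: "(real^3) \<times> (real^3)"
  define F2 where "F2 p = indicator {x. R \<le> norm x} (fst p) * ennreal (sqrt (1 + (norm (snd p))\<^sup>2) * f (fst p) (snd p))"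
    for p :: "(real^3) \<times> (real^3)"
  have m1[measurable]: "F1 \<in> borel_measurable lebesgue" unfolding F1_def by measurable
  have m2[measurable]: "F2 \<in> borel_measurable lebesgue" unfolding F2_def by measurable
  have "total_mass f = (\<integral>\<^sup>+ x. \<integral>\<^sup>+ v. F1 (x, v) + F2 (x, v) \<partial>lebesgue \<partial>lebesgue)"
    unfolding total_mass_def F1_def F2_def
    by (intro nn_integral_cong) (auto simp: indicator_def)
  also have "\<dots> = (\<integral>\<^sup>+ p. F1 p + F2 p \<partial>lebesgue)"
    using tonelli_lebesgue(2)[of "\<lambda>p. F1 p + F2 p"] by simp
  also have "\<dots> = (\<integral>\<^sup>+ p. F1 p \<partial>lebesgue) + (\<integral>\<^sup>+ p. F2 p \<partial>lebesgue)"
    by (rule nn_integral_add) auto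
  also have "(\<integral>\<^sup>+ p. F1 p \<partial>lebesgue) = total_mass (cutR R f)"
    unfolding total_mass_def tonelli_lebesgue(2)[OF m1, symmetric]
    by (intro nn_integral_cong) (auto simp: F1_def cutR_def indicator_def)
  also have "(\<integral>\<^sup>+ p. F2 p \<partial>lebesgue) = outer_mass f R"
    unfolding outer_mass_def tonelli_lebesgue(2)[OF m2, symmetric] ind_pull
    by (simp add: F2_def)
  finally show ?thesis .
qed



context
  fixes k M \<beta> \<sigma>0 :: real
  assumes k: "0 < k" and M: "0 < M" and b: "0 < \<beta>" "\<beta> < 1/2"
    and s: "0 < \<sigma>0" "\<sigma>0 \<le> 3 * \<beta>^3 / (4 * pi * M\<^sup>2)"
begin

lemma el_meas:
  assumes f: "f \<in> admissible M \<sigma>0"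
  shows "exp_lambda f \<in> borel_measurable borel"
  using exp_lambda_meas mass_mono adm_D[OF k M b s f] M by auto

lemma outer_el:
  assumes f: "f \<in> admissible M \<sigma>0" and c: "1 < c" and R: "0 < R" "2 * M / (1 - 1 / c\<^sup>2) \<le> R"
    and x: "R \<le> r"
  shows "exp_lambda f r \<le> c" "0 \<le> exp_lambda f r"
proof -
  define q where "q = 1 - 1 / c\<^sup>2"
  have c2: "1 < c\<^sup>2" using c by (metis less_1_mult power2_eq_square order.strict_trans zero_less_one)
  have "1 / c\<^sup>2 < 1" using c2 by (simp add: divide_less_eq)
  then have q: "0 < q" by (simp add: q_def)
  have m: "mass f r \<le> M" "0 \<le> mass f r" using mass_le_total adm_D[OF k M b s f] M mass_nonneg by auto
  have r: "0 < r" using R x by simp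
  have "2 * M \<le> R * q" using R(2) q by (simp add: q_def divide_le_eq mult.commute)
  moreover have "R * q \<le> r * q" using x q by (intro mult_right_mono) auto
  ultimately have "2 * M \<le> r * q" by linarith
  then have "2 * M / r \<le> q" using r by (simp add: divide_le_eq mult.commute)
  moreover have "2 * mass f r / r \<le> 2 * M / r" using m r by (simp add: divide_right_mono)
  ultimately have t: "2 * mass f r / r \<le> q" by linarith
  have t0: "0 \<le> 2 * mass f r / r" using m r by simp
  have p: "1 / c\<^sup>2 \<le> 1 - 2 * mass f r / r" using t by (simp add: q_def)
  have "sqrt (1 / c\<^sup>2) \<le> sqrt (1 - 2 * mass f r / r)" using p by simp
  moreover have "sqrt (1 / c\<^sup>2) = 1 / c" using c by (simp add: real_sqrt_divide)
  ultimately have sq: "1 / c \<le> sqrt (1 - 2 * mass f r / r)" by simp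
  have pos: "0 < 1 / c" using c by simp
  have "1 / sqrt (1 - 2 * mass f r / r) \<le> 1 / (1 / c)"
  proof (rule divide_left_mono)
    have sp: "0 < sqrt (1 - 2 * mass f r / r)" using sq pos by linarith
    show "0 < sqrt (1 - 2 * mass f r / r) * (1 / c)" using mult_pos_pos[OF sp pos] .
  qed (use sq in auto)
  then show "exp_lambda f r \<le> c" by (simp add: exp_lambda_def)
  have "0 < sqrt (1 - 2 * mass f r / r)" using sq pos by linarith
  then show "0 \<le> exp_lambda f r" unfolding exp_lambda_def by simp
qed

lemma NN_split:
  assumes f: "f \<in> admissible M \<sigma>0" and c: "1 < c" and R: "0 < R" "2 * M / (1 - 1 / c\<^sup>2) \<le> R"
  shows "NN k f \<le> NN k (cutR R f) + ennreal c * outer_mass f R"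
proof -
  note fm = adm_D[OF k M b s f]
  note [measurable] = tm3 fm(1) negI_meas[OF fm(1) el_meas[OF f]]
  define G1 where "G1 p = indicator {x. norm x < R} (fst p) * negI k f (fst p) (snd p)"
    for p :: "(real^3) \<times> (real^3)"
  define F2 where "F2 p = indicator {x. R \<le> norm x} (fst p) * ennreal (sqrt (1 + (norm (snd p))\<^sup>2) * f (fst p) (snd p))"
    for p :: "(real^3) \<times> (real^3)"
  have m1[measurable]: "G1 \<in> borel_measurable lebesgue" unfolding G1_def by measurable
  have m2[measurable]: "F2 \<in> borel_measurable lebesgue" unfolding F2_def by measurable
  have pw: "negI k f x v \<le> G1 (x, v) + ennreal c * F2 (x, v)" for x v
  proof (cases "R \<le> norm x")
    case True
    have e: "exp_lambda f (norm x) \<le> c" "0 \<le> exp_lambda f (norm x)"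
      using outer_el[OF f c R True] by auto
    have ch: "0 \<le> chi k (f x v)" using chi_nonneg[OF fm(2) k] .
    have w: "1 \<le> sqrt (1 + (norm v)\<^sup>2)" by simp
    have fx: "0 \<le> f x v" using fm(2) .
    have "- (exp_lambda f (norm x) * (chi k (f x v) - f x v)) \<le> exp_lambda f (norm x) * f x v"
      using e ch by (simp add: algebra_simps)
    also have "\<dots> \<le> c * f x v" using e fx by (intro mult_right_mono) auto
    also have "\<dots> \<le> c * (sqrt (1 + (norm v)\<^sup>2) * f x v)"
      using c mult_right_mono[OF w fx] by (intro mult_left_mono) auto
    finally have "max (- (exp_lambda f (norm x) * (chi k (f x v) - f x v))) 0 \<le> c * (sqrt (1 + (norm v)\<^sup>2) * f x v)"
      using c fx by auto
    then have "negI k f x v \<le> ennreal (c * (sqrt (1 + (norm v)\<^sup>2) * f x v))"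
      unfolding negI_def by (rule ennreal_leI)
    also have "\<dots> = ennreal c * F2 (x, v)"
      using True c fx by (simp add: F2_def ennreal_mult)
    finally show ?thesis by (simp add: add_increasing)
  next
    case False
    then show ?thesis by (simp add: G1_def add_increasing2)
  qed
  have "NN k f \<le> (\<integral>\<^sup>+ x. \<integral>\<^sup>+ v. G1 (x, v) + ennreal c * F2 (x, v) \<partial>lebesgue \<partial>lebesgue)"
    unfolding NN_def by (intro nn_integral_mono pw)
  also have "\<dots> = (\<integral>\<^sup>+ p. G1 p + ennreal c * F2 p \<partial>lebesgue)"
    using tonelli_lebesgue(2)[of "\<lambda>p. G1 p + ennreal c * F2 p"] by simp
  also have "\<dots> = (\<integral>\<^sup>+ p. G1 p \<partial>lebesgue) + ennreal c * (\<integral>\<^sup>+ p. F2 p \<partial>lebesgue)"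
    by (subst nn_integral_add) (auto simp: nn_integral_cmult)
  also have "(\<integral>\<^sup>+ p. G1 p \<partial>lebesgue) = NN k (cutR R f)"
    unfolding NN_def tonelli_lebesgue(2)[OF m1, symmetric]
    by (simp add: G1_def negI_cutR')
  also have "(\<integral>\<^sup>+ p. F2 p \<partial>lebesgue) = outer_mass f R"
    unfolding outer_mass_def tonelli_lebesgue(2)[OF m2, symmetric] ind_pull
    by (simp add: F2_def)
  finally show ?thesis .
qed

end



lemma rho_meas:
  fixes f :: "real^3 \<Rightarrow> real^3 \<Rightarrow> real"
  assumes f: "(\<lambda>p. f (fst p) (snd p)) \<in> borel_measurable lebesgue"
  shows "rho f \<in> borel_measurable lebesgue"
proof -
  have "(\<lambda>x. \<integral>\<^sup>+ y. ennreal (1 * (sqrt (1 + (norm (snd (x,y)))\<^sup>2) * f (fst (x,y)) (snd (x,y)))) \<partial>lebesgue) \<in> borel_measurable lebesgue"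
    by (rule tonelli_lebesgue(1)[OF wf_meas[OF f, of 1]])
  then show ?thesis unfolding rho_def[abs_def] by simp
qed

lemma scl_meas:
  fixes g :: "real^3 \<Rightarrow> real^3 \<Rightarrow> real"
  assumes g: "(\<lambda>p. g (fst p) (snd p)) \<in> borel_measurable lebesgue" and s: "s \<noteq> 0"
  shows "(\<lambda>p. scl s g (fst p) (snd p)) \<in> borel_measurable lebesgue"
proof -
  have "(\<lambda>p. g (fst p) (snd p)) \<circ> (\<lambda>p::(real^3) \<times> (real^3). (s *\<^sub>R fst p, snd p)) \<in> borel_measurable lebesgue"
    by (rule measurable_comp[OF measurable_scale_fst[OF s] g])
  then show ?thesis by (simp add: scl_def o_def)
qed

lemma scl_sph: "sph_sym g \<Longrightarrow> sph_sym (scl s g)"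
  unfolding sph_sym_def scl_def
proof (intro allI impI)
  fix A :: "real^3^3" and x v :: "real^3" assume g: "\<forall>A x v. rotation_matrix A \<longrightarrow> g (A *v x) (A *v v) = g x v" and A: "rotation_matrix A"
  have "g (s *\<^sub>R (A *v x)) (A *v v) = g (A *v (s *\<^sub>R x)) (A *v v)" by (simp add: matrix_vector_mult_scaleR)
  also have "\<dots> = g (s *\<^sub>R x) v" using g A by blast
  finally show "g (s *\<^sub>R (A *v x)) (A *v v) = g (s *\<^sub>R x) v" .
qed

lemma id_leb[measurable]: "(\<lambda>x::'a::euclidean_space. x) \<in> borel_measurable lebesgue"
  by (rule measurable_completion) simp

lemma rho_scl: "rho (scl s g) x = rho g (s *\<^sub>R x)"
  by (simp add: rho_def scl_def)

lemma mass_scl: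
  fixes g :: "real^3 \<Rightarrow> real^3 \<Rightarrow> real"
  assumes g: "(\<lambda>p. g (fst p) (snd p)) \<in> borel_measurable lebesgue" and s: "0 < s"
  shows "mass (scl s g) r = 1 / s ^ 3 * mass g (s * r)"
proof -
  note [measurable] = rho_meas[OF g]
  define \<phi> where "\<phi> y = indicator {y. norm y \<le> s * r} y * rho g y" for y :: "real^3"
  have pm: "\<phi> \<in> borel_measurable lebesgue" unfolding \<phi>_def
    by (intro borel_measurable_times_ennreal rho_meas[OF g] borel_measurable_indicator') (simp add: pred_def[symmetric]; measurable)
  have "(\<integral>\<^sup>+ x. indicator {x. norm x \<le> r} x * rho (scl s g) x \<partial>lebesgue) = (\<integral>\<^sup>+ x. \<phi> (s *\<^sub>R x) \<partial>lebesgue)"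
    using s by (intro nn_integral_cong) (simp add: \<phi>_def rho_scl indicator_def)
  also have "\<dots> = ennreal (1 / s ^ DIM(real^3)) * (\<integral>\<^sup>+ x. \<phi> x \<partial>lebesgue)"
    by (rule nn_integral_scale_lebesgue[OF pm s])
  finally have eq: "(\<integral>\<^sup>+ x. indicator {x. norm x \<le> r} x * rho (scl s g) x \<partial>lebesgue) =
     ennreal (1 / s ^ 3) * (\<integral>\<^sup>+ x. \<phi> x \<partial>lebesgue)" by simp
  show ?thesis
    using eq s unfolding mass_def rho_def[symmetric] \<phi>_def by (simp add: enn2real_mult)
qed



lemma el_mono_scl:
  fixes g :: "real^3 \<Rightarrow> real^3 \<Rightarrow> real"
  assumes g: "(\<lambda>p. g (fst p) (snd p)) \<in> borel_measurable lebesgue" and s: "0 < s" "s \<le> 1"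
    and r: "0 \<le> r" and rat: "r > 0 \<Longrightarrow> 2 * mass (scl s g) r / r < 1"
  shows "exp_lambda g (s * r) \<le> exp_lambda (scl s g) r" "0 \<le> exp_lambda g (s * r)"
proof -
  have "exp_lambda g (s * r) \<le> exp_lambda (scl s g) r \<and> 0 \<le> exp_lambda g (s * r)"
  proof (cases "r = 0")
    case True then show ?thesis by (simp add: exp_lambda_def)
  next
    case False
    then have rp: "0 < r" using r by simp
    define m where "m = mass g (s * r)"
    have m0: "0 \<le> m" by (simp add: m_def mass_nonneg)
    have ms: "mass (scl s g) r = m / s ^ 3" using mass_scl[OF g s(1)] by (simp add: m_def)
    define t1 where "t1 = 2 * (m / s ^ 3) / r"
    define t2 where "t2 = 2 * m / (s * r)"
    have t1: "t1 < 1" using rat[OF rp] ms by (simp add: t1_def)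
    have s3: "s ^ 3 \<le> s" using s by (simp add: power_le_one power3_eq_cube mult_le_one mult_le_cancel_left1)
    have "m / s \<le> m / s ^ 3" using s s3 m0 by (intro divide_left_mono) auto
    then have "2 * (m / s) / r \<le> 2 * (m / s ^ 3) / r" using rp
      by (intro divide_right_mono mult_left_mono) auto
    moreover have "t2 = 2 * (m / s) / r" by (simp add: t2_def)
    ultimately have t12: "t2 \<le> t1" by (simp add: t1_def)
    have p1: "0 < 1 - t1" using t1 by simp
    have sq: "sqrt (1 - t1) \<le> sqrt (1 - t2)" using t12 by simp
    have sp: "0 < sqrt (1 - t1)" using p1 by simp
    have "1 / sqrt (1 - t2) \<le> 1 / sqrt (1 - t1)"
      using sq sp by (intro divide_left_mono) (auto intro!: mult_pos_pos)
    moreover have "0 \<le> 1 / sqrt (1 - t2)" using sq sp by simp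
    ultimately show ?thesis
      by (simp add: exp_lambda_def ms t1_def t2_def m_def)
  qed
  then show "exp_lambda g (s * r) \<le> exp_lambda (scl s g) r" "0 \<le> exp_lambda g (s * r)" by auto
qed



lemma total_mass_rho: "total_mass f = (\<integral>\<^sup>+ x. rho f x \<partial>lebesgue)"
  by (simp add: total_mass_def rho_def)

context
  fixes k M \<beta> \<sigma>0 :: real
  assumes k: "0 < k" and M: "0 < M" and b: "0 < \<beta>" "\<beta> < 1/2"
    and s: "0 < \<sigma>0" "\<sigma>0 \<le> 3 * \<beta>^3 / (4 * pi * M\<^sup>2)"
begin

lemma scale_bound:
  assumes f: "f \<in> admissible M \<sigma>0" and f1: "\<And>x v. f x v \<le> 1"
    and Ival: "\<And>g. g \<in> admissible M \<sigma>0 \<Longrightarrow> ereal (-J) \<le> Dfun k g"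
    and M1: "0 < enn2real (total_mass (cutR R f))"
  shows "NN k (cutR R f) \<le> ennreal (J * (enn2real (total_mass (cutR R f)) / M))"
proof -
  note fm = adm_D[OF k M b s f]
  define g where "g = cutR R f"
  define M1 where "M1 = enn2real (total_mass g)"
  have gm: "(\<lambda>p. g (fst p) (snd p)) \<in> borel_measurable lebesgue" unfolding g_def by (rule cutR_meas[OF fm(1)])
  have tsplit: "total_mass f = total_mass g + outer_mass f R"
    unfolding g_def by (rule total_mass_split[OF fm(1) fm(2)])
  have tle: "total_mass g \<le> ennreal M" using tsplit fm(4) by (metis le_iff_add)
  then have tg: "total_mass g = ennreal M1" unfolding M1_def
    by (metis ennreal_enn2real ennreal_less_top order_le_less_trans top.not_eq_extremum)
  have M1p: "0 < M1" using M1 by (simp add: M1_def g_def)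
  have M1M: "M1 \<le> M" using tle tg M by simp
  define sc where "sc = root 3 (M1 / M)"
  have scp: "0 < sc" using M1p M by (simp add: sc_def)
  have sc1: "sc \<le> 1" using M1M M M1p by (simp add: sc_def)
  have sc3: "sc ^ 3 = M1 / M" using M1p M unfolding sc_def by (intro real_root_pow_pos2) auto
  define ga where "ga = scl sc g"
  have g01: "0 \<le> g x v" "g x v \<le> 1" for x v using fm(2) f1 by (auto simp: g_def cutR_def)
  have ga01: "0 \<le> ga x v" "ga x v \<le> 1" for x v using g01 by (auto simp: ga_def scl_def)
  have rho_ga: "rho ga x \<le> ennreal \<sigma>0" for x
  proof -
    have "rho ga x = indicator {x. norm x < R} (sc *\<^sub>R x) * rho f (sc *\<^sub>R x)"
      by (simp add: ga_def rho_scl g_def rho_cutR)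
    also have "\<dots> \<le> rho f (sc *\<^sub>R x)" by (simp add: indicator_def)
    also have "\<dots> \<le> ennreal \<sigma>0" using fm(5) .
    finally show ?thesis .
  qed
  have rgm: "rho g \<in> borel_measurable lebesgue" by (rule rho_meas[OF gm])
  have tga: "total_mass ga = ennreal M"
  proof -
    have "total_mass ga = (\<integral>\<^sup>+ x. rho g (sc *\<^sub>R x) \<partial>lebesgue)"
      by (simp add: total_mass_rho ga_def rho_scl)
    also have "\<dots> = ennreal (1 / sc ^ DIM(real^3)) * (\<integral>\<^sup>+ x. rho g x \<partial>lebesgue)"
      by (rule nn_integral_scale_lebesgue[OF rgm scp])
    also have "\<dots> = ennreal (1 / sc ^ 3) * ennreal M1" by (simp add: total_mass_rho[symmetric] tg)
    also have "\<dots> = ennreal (M1 / sc ^ 3)" using scp M1p by (simp add: ennreal_mult[symmetric])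
    also have "M1 / sc ^ 3 = M" using sc3 M M1p by simp
    finally show ?thesis .
  qed
  have ga_adm: "ga \<in> admissible M \<sigma>0"
    unfolding admissible_def
    using scl_meas[OF gm, of sc] scp ga01 scl_sph[OF cutR_sph[OF fm(3)]] tga rho_ga
    by (auto simp: ga_def g_def)
  have ega: "0 \<le> exp_lambda ga r" if "0 \<le> r" for r
    using el_bounds[OF k M b s ga_adm that] by simp
  have rat: "2 * mass ga r / r < 1" if "r > 0" for r
  proof -
    have "mass ga r / r \<le> \<beta>"
      using mass_ratio[of ga \<sigma>0 M \<beta> r] adm_D[OF k M b s ga_adm] M b s that by auto
    then show ?thesis using b by simp
  qed
  have pw: "negI k g (sc *\<^sub>R x) v \<le> negI k ga x v" for x v
  proof -
    have e: "exp_lambda g (sc * norm x) \<le> exp_lambda ga (norm x)" "0 \<le> exp_lambda g (sc * norm x)"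
      using el_mono_scl[OF gm scp sc1, of "norm x"] rat unfolding ga_def by auto
    have nx: "norm (sc *\<^sub>R x) = sc * norm x" using scp by simp
    define y where "y = g (sc *\<^sub>R x) v"
    have y: "0 \<le> y" "y \<le> 1" using g01 by (auto simp: y_def)
    have d: "chi k y - y \<le> 0" using chi_le[OF y k] by simp
    have "- (exp_lambda g (sc * norm x) * (chi k y - y)) \<le> - (exp_lambda ga (norm x) * (chi k y - y))"
      using e d by (simp add: mult_right_mono_neg)
    then have "max (- (exp_lambda g (sc * norm x) * (chi k y - y))) 0 \<le> max (- (exp_lambda ga (norm x) * (chi k y - y))) 0"
      by simp
    then show ?thesis unfolding negI_def nx
      by (intro ennreal_leI) (simp add: y_def ga_def scl_def)
  qed
  define \<psi> where "\<psi> x = (\<integral>\<^sup>+ v. negI k g x v \<partial>lebesgue)" for x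
  have \<psi>m: "\<psi> \<in> borel_measurable lebesgue"
  proof -
    note [measurable] = negI_meas[OF fm(1) el_meas[OF k M b s f]]
    have G1: "(\<lambda>p::(real^3) \<times> (real^3). indicator {x. norm x < R} (fst p) * negI k f (fst p) (snd p)) \<in> borel_measurable lebesgue"
      by measurable
    show ?thesis using tonelli_lebesgue(1)[OF G1] by (simp add: \<psi>_def[abs_def] g_def negI_cutR')
  qed
  have "ennreal (1 / sc ^ 3) * NN k g = (\<integral>\<^sup>+ x. \<psi> (sc *\<^sub>R x) \<partial>lebesgue)"
    using nn_integral_scale_lebesgue[OF \<psi>m scp] by (simp add: NN_def \<psi>_def)
  also have "\<dots> \<le> NN k ga"
    unfolding NN_def \<psi>_def by (intro nn_integral_mono pw)
  also have "NN k ga \<le> ennreal J"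
  proof -
    have "Dfun k ga = - enn2ereal (NN k ga)"
      by (rule Dfun_small) (use ga01 ega k in auto)
    then have "ereal (-J) \<le> - enn2ereal (NN k ga)" using Ival[OF ga_adm] by simp
    then have "- ereal J \<le> - enn2ereal (NN k ga)" by simp
    then have le: "enn2ereal (NN k ga) \<le> ereal J" by (simp only: ereal_minus_le_minus)
    then have J0: "0 \<le> J" using enn2ereal_nonneg[of "NN k ga"] by (metis ereal_less_eq(5) order_trans)
    show ?thesis using le J0 by (simp add: less_eq_ennreal.rep_eq)
  qed
  finally have A: "ennreal (1 / sc ^ 3) * NN k g \<le> ennreal J" .
  have "NN k g = ennreal (sc ^ 3) * (ennreal (1 / sc ^ 3) * NN k g)"
    using scp by (simp add: mult.assoc[symmetric] ennreal_mult[symmetric])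
  also have "\<dots> \<le> ennreal (sc ^ 3) * ennreal J" using A by (intro mult_left_mono) auto
  also have "\<dots> = ennreal (J * (M1 / M))"
  proof -
    have "ennreal (sc ^ 3) * ennreal J = ennreal (sc ^ 3 * J)" using scp by (simp add: ennreal_mult')
    also have "sc ^ 3 * J = J * (M1 / M)" using sc3 by simp
    finally show ?thesis .
  qed
  finally show ?thesis by (simp add: g_def M1_def)
qed

end



lemma fin_enn: "x \<le> ennreal a \<Longrightarrow> ennreal (enn2real x) = x"
  by (metis ennreal_enn2real ennreal_less_top order_le_less_trans top.not_eq_extremum)

lemma sum_fin: "ennreal M = (a::ennreal) + b \<Longrightarrow> a \<le> ennreal M \<and> b \<le> ennreal M"
  by (simp add: add_increasing add_increasing2)

theorem corollary5p5:
  fixes k M \<beta> \<sigma>0 \<delta> :: real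
    and I :: ereal
    and h :: "real^3 \<Rightarrow> real^3 \<Rightarrow> real"
    and R :: "nat \<Rightarrow> real"
  assumes "0 < k" "k \<le> 2" "0 < M" "0 < \<beta>" "\<beta> < 1/2"
    and "0 < \<sigma>0" "\<sigma>0 \<le> min 1 (3 * \<beta>^3 / (4 * pi * M\<^sup>2))"
    and "I = (INF f\<in>admissible M \<sigma>0. Dfun k f)"
    and "h \<in> admissible M \<sigma>0" "Dfun k h < 0"
    and "0 < \<delta>" "\<bar>Dfun k h\<bar> \<ge> ereal (M + \<delta>)"
    and "\<And>n. R n \<ge> max (8 * M / 3) (2 * M / (1 - 1 / (1 + \<delta> / (6 * M))\<^sup>2))"
  shows "\<not> (\<exists>f :: nat \<Rightarrow> real^3 \<Rightarrow> real^3 \<Rightarrow> real.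
              (\<forall>n. f n \<in> admissible M \<sigma>0)
            \<and> (\<lambda>n. Dfun k (f n)) \<longlonglongrightarrow> I
            \<and> (\<forall>n x v. f n x v \<le> 1)
            \<and> (\<exists>L. 0 < L \<and> L < M \<and> (\<lambda>n. outer_mass (f n) (R n)) \<longlonglongrightarrow> ennreal L))"
proof
  assume "\<exists>f :: nat \<Rightarrow> real^3 \<Rightarrow> real^3 \<Rightarrow> real.
              (\<forall>n. f n \<in> admissible M \<sigma>0)
            \<and> (\<lambda>n. Dfun k (f n)) \<longlonglongrightarrow> I
            \<and> (\<forall>n x v. f n x v \<le> 1)
            \<and> (\<exists>L. 0 < L \<and> L < M \<and> (\<lambda>n. outer_mass (f n) (R n)) \<longlonglongrightarrow> ennreal L)"
  then obtain f :: "nat \<Rightarrow> real^3 \<Rightarrow> real^3 \<Rightarrow> real" and L where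
    fA: "\<And>n. f n \<in> admissible M \<sigma>0" and fD: "(\<lambda>n. Dfun k (f n)) \<longlonglongrightarrow> I"
    and f1: "\<And>n x v. f n x v \<le> 1" and L: "0 < L" "L < M"
    and fL: "(\<lambda>n. outer_mass (f n) (R n)) \<longlonglongrightarrow> ennreal L"
    by blast
  have k: "0 < k" and M: "0 < M" and b: "0 < \<beta>" "\<beta> < 1/2" and s: "0 < \<sigma>0" "\<sigma>0 \<le> 3 * \<beta>^3 / (4 * pi * M\<^sup>2)"
    using assms by auto
  have \<delta>: "0 < \<delta>" by fact
  define c where "c = 1 + \<delta> / (6 * M)"
  have c1: "1 < c" using \<delta> M by (simp add: c_def)
  have Rn: "0 < R n" "2 * M / (1 - 1 / c\<^sup>2) \<le> R n" for n
  proof -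
    have "8 * M / 3 \<le> R n" "2 * M / (1 - 1 / c\<^sup>2) \<le> R n" using assms(13)[of n] by (auto simp: c_def)
    then show "0 < R n" "2 * M / (1 - 1 / c\<^sup>2) \<le> R n" using M by auto
  qed
  have Ih: "I \<le> Dfun k h" unfolding assms(8) by (rule INF_lower[OF assms(9)])
  have hD: "Dfun k h \<le> ereal (- (M + \<delta>))"
    using assms(10) assms(12) by (cases "Dfun k h") auto
  have Ilow: "ereal (- (1 / sqrt (1 - 2 * \<beta>) * M)) \<le> I"
    unfolding assms(8) by (rule INF_greatest) (rule Dfun_lower[OF k M b s])
  obtain J where IJ: "I = ereal (- J)"
  proof (cases I)
    case (real r) then show ?thesis using that[of "-r"] by simp
  next
    case PInf then show ?thesis using Ih hD by simp
  next
    case MInf then show ?thesis using Ilow by simp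
  qed
  have "ereal (- J) \<le> ereal (- (M + \<delta>))" using Ih hD unfolding IJ by (rule order_trans)
  then have JM: "M + \<delta> \<le> J" by simp
  have Ival: "\<And>g. g \<in> admissible M \<sigma>0 \<Longrightarrow> ereal (-J) \<le> Dfun k g"
    unfolding IJ[symmetric] assms(8) by (rule INF_lower)
  define N where "N n = enn2real (NN k (f n))" for n
  define dM where "dM n = enn2real (outer_mass (f n) (R n))" for n
  have NNfin: "NN k (f n) = ennreal (N n)" for n
  proof -
    have "NN k (f n) \<le> ennreal (1 / sqrt (1 - 2 * \<beta>) * M)" by (rule NN_bound[OF k M b s fA])
    then show ?thesis unfolding N_def by (rule fin_enn[symmetric])
  qed
  have Dn: "Dfun k (f n) = ereal (- N n)" for n
  proof -
    have "Dfun k (f n) = - enn2ereal (NN k (f n))"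
    proof (rule Dfun_small)
      show "0 \<le> exp_lambda (f n) r" if "0 \<le> r" for r
        using el_bounds(1)[OF k M b s fA that, of n] by simp
    qed (use adm_D(2)[OF k M b s fA] f1 k in auto)
    moreover have "0 \<le> N n" by (simp add: N_def)
    ultimately show ?thesis by (simp add: NNfin)
  qed
  have NJ: "N \<longlonglongrightarrow> J"
  proof -
    have "(\<lambda>n. ereal (- N n)) \<longlonglongrightarrow> ereal (- J)" using fD unfolding IJ Dn .
    then have "(\<lambda>n. - N n) \<longlonglongrightarrow> - J" by (simp add: lim_ereal)
    from tendsto_minus[OF this] show ?thesis by simp
  qed
  have dML: "dM \<longlonglongrightarrow> L" unfolding dM_def by (rule tendsto_enn2real[OF fL]) (use L in simp)
  have split: "M = enn2real (total_mass (cutR (R n) (f n))) + dM n" for n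
  proof -
    have t: "ennreal M = total_mass (cutR (R n) (f n)) + outer_mass (f n) (R n)"
      using total_mass_split[OF adm_D(1,2)[OF k M b s fA]] adm_D(4)[OF k M b s fA] by simp
    then have "ennreal (enn2real (total_mass (cutR (R n) (f n)))) = total_mass (cutR (R n) (f n))"
         "ennreal (enn2real (outer_mass (f n) (R n))) = outer_mass (f n) (R n)"
      using fin_enn[of "total_mass (cutR (R n) (f n))" M] fin_enn[of "outer_mass (f n) (R n)" M] sum_fin[OF t] by auto
    then have "ennreal M = ennreal (enn2real (total_mass (cutR (R n) (f n)))) + ennreal (dM n)"
      using t unfolding dM_def by simp
    also have "\<dots> = ennreal (enn2real (total_mass (cutR (R n) (f n))) + dM n)"
      by (rule ennreal_plus[symmetric]) (auto simp: dM_def)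
    finally show ?thesis using M by (subst (asm) ennreal_inj) (auto simp: dM_def)
  qed
  have ineq: "N n \<le> J * ((M - dM n) / M) + c * dM n" if pos: "dM n < M" for n
  proof -
    have M1: "0 < enn2real (total_mass (cutR (R n) (f n)))" using split[of n] pos by simp
    have o: "outer_mass (f n) (R n) = ennreal (dM n)"
    proof -
      have "ennreal M = total_mass (cutR (R n) (f n)) + outer_mass (f n) (R n)"
        using total_mass_split[OF adm_D(1,2)[OF k M b s fA]] adm_D(4)[OF k M b s fA] by simp
      then have "outer_mass (f n) (R n) \<le> ennreal M" using sum_fin by blast
      then show ?thesis unfolding dM_def by (rule fin_enn[symmetric])
    qed
    have A: "NN k (f n) \<le> NN k (cutR (R n) (f n)) + ennreal c * outer_mass (f n) (R n)"
      by (rule NN_split[OF k M b s fA c1 Rn])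
    have B0: "NN k (cutR (R n) (f n)) \<le> ennreal (J * (enn2real (total_mass (cutR (R n) (f n))) / M))"
      by (rule scale_bound[OF k M b s fA f1 Ival M1])
    have "enn2real (total_mass (cutR (R n) (f n))) = M - dM n" using split[of n] by simp
    then have B: "NN k (cutR (R n) (f n)) \<le> ennreal (J * ((M - dM n) / M))" using B0 by simp
    have C: "ennreal c * outer_mass (f n) (R n) = ennreal (c * dM n)"
      unfolding o using c1 by (simp add: ennreal_mult')
    have le1: "ennreal (N n) \<le> ennreal (J * ((M - dM n) / M)) + ennreal (c * dM n)"
      using order_trans[OF A add_right_mono[OF B]] unfolding NNfin C .
    have J0: "0 \<le> J" using JM M \<delta> by linarith
    have nn1: "0 \<le> J * ((M - dM n) / M)" using J0 M pos by (intro mult_nonneg_nonneg divide_nonneg_pos) auto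
    have nn2: "0 \<le> c * dM n" using c1 by (simp add: dM_def)
    have "ennreal (N n) \<le> ennreal (J * ((M - dM n) / M) + c * dM n)"
      using le1 unfolding ennreal_plus[OF nn1 nn2] .
    moreover have "0 \<le> J * ((M - dM n) / M) + c * dM n" using nn1 nn2 by linarith
    ultimately show ?thesis using ennreal_le_iff by blast
  qed
  have ev: "eventually (\<lambda>n. dM n < M) sequentially" using order_tendstoD(2)[OF dML L(2)] .
  have lim2: "(\<lambda>n. J * ((M - dM n) / M) + c * dM n) \<longlonglongrightarrow> J * ((M - L) / M) + c * L"
    by (intro tendsto_intros dML) (use M in auto)
  have "J \<le> J * ((M - L) / M) + c * L"
    by (rule LIMSEQ_le[OF NJ lim2]) (use ev ineq in \<open>auto simp: eventually_sequentially\<close>)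
  then have "J * L / M \<le> c * L" using M by (simp add: field_simps)
  then have "J * L \<le> c * M * L" using M by (simp add: divide_le_eq mult.commute mult.left_commute)
  then have "J \<le> c * M" using L by simp
  moreover have "c * M = M + \<delta> / 6" using M by (simp add: c_def field_simps)
  ultimately show False using JM \<delta> by linarith
qed

end
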